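(* Let $R$ be a commutative ring in which $2$ is invertible, let $Q$ be a quadratic space over $R$, let $m\ge 1$ and $M=Q\perp\mathbb{H}(R)^m$. Then $\mathrm{EO}_R(Q,\mathbb{H}(R)^m)=\mathrm{ETransO}(M)$.
   Context: A quadratic $R$-module $(Q,q)$ is a finitely generated projective $R$-module with a quadratic form $q$; its bilinear form is $\langle x,y\rangle=q(x+y)-q(x)-q(y)$ (so $\langle x,x\rangle=2q(x)$). It is a quadratic space if $z\mapsto\langle z,-\rangle$ is an isomorphism $Q\to Q^*$. For a finitely generated projective $P$, $\mathbb{H}(P)=P\oplus P^*$ with $q(y,g)=g(y)$, i.e. $\langle(y_1,g_1),(y_2,g_2)\rangle=g_2(y_1)+g_1(y_2)$; orthogonal sums carry the sum of the forms. $\mathbb{H}(R)^m=\mathbb{H}(R^m)$ with basis $x_1,\dots,x_m$ of $R^m$ and dual basis $f_1,\dots,f_m$ ($f_i(x_j)=\delta_{ij}$). DSER transformations on $Q\perp\mathbb{H}(P)$: for $R$-linear $\alpha:Q\to P$, let $\alpha^*:P^*\to Q$ be determined by $\langle\alpha^*(g),z\rangle=g(\alpha(z))$ for all $z\in Q$, and $E_\alpha(z,y,g)=(z-\alpha^*(g),\,y+\alpha(z)-\tfrac12\alpha\alpha^*(g),\,g)$; for $R$-linear $\beta:Q\to P^*$, let $\beta^*:P\to Q$ be determined by $\langle\beta^*(y),z\rangle=\beta(z)(y)$, and $E^*_\beta(z,y,g)=(z-\beta^*(y),\,y,\,g+\beta(z)-\tfrac12\beta\beta^*(y))$. $\mathrm{EO}_R(Q,\mathbb{H}(P))$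 is generated by all $E_\alpha,E^*_\beta$. Elementary orthogonal transvections on $M=Q\perp\mathbb{H}(R)^m$: for $w\in Q$ and $1\le i\le m$, writing elements as $(z,\sum_j a_jx_j+\sum_j b_jf_j)$, set $E^w_{1i}(z,\sum a_jx_j+\sum b_jf_j)=(z-b_iw,\ \sum a_jx_j+(\langle z,w\rangle-b_iq(w))x_i+\sum b_jf_j)$ and $E^w_{2i}(z,\sum a_jx_j+\sum b_jf_j)=(z-a_iw,\ \sum a_jx_j+\sum b_jf_j+(\langle z,w\rangle-a_iq(w))f_i)$. $\mathrm{ETransO}(M)$ is the group generated by all $E^w_{1i},E^w_{2i}$ ($w\in Q$, $1\le i\le m$). *)

theory Defs
  imports HOL.Modules "HOL-Algebra.Bij" "HOL-Algebra.Generated_Groups"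
begin

text \<open>R is a type 'r of class comm_ring_1; Q is a type 'q with an R-module
  structure given by the scalar multiplication s (Main's locale module).\<close>

definition lin_functional :: "('r::comm_ring_1 \<Rightarrow> 'q::ab_group_add \<Rightarrow> 'q) \<Rightarrow> ('q \<Rightarrow> 'r) \<Rightarrow> bool" where
  "lin_functional s f \<longleftrightarrow> Modules.module_hom s (*) f"

text \<open>Q is finitely generated projective: Q is a direct summand (retract) of some R^n,
  via an R-linear map i = (phi_0,...,phi_(n-1)) : Q to R^n and p : R^n to Q,
  p(c) = sum of c_k e_k, with p o i = id.\<close>
definition fg_projective :: "('r::comm_ring_1 \<Rightarrow> 'q::ab_group_add \<Rightarrow> 'q) \<Rightarrow> bool" where
  "fg_projective s \<longleftrightarrow> Modules.module s \<and>
     (\<exists>(n::nat) (phi :: nat \<Rightarrow> 'q \<Rightarrow> 'r) (e :: nat \<Rightarrow> 'q).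
        (\<forall>k<n. lin_functional s (phi k)) \<and> (\<forall>z. z = (\<Sum>k<n. s (phi k z) (e k))))"

definition polar :: "('q::ab_group_add \<Rightarrow> 'r::comm_ring_1) \<Rightarrow> 'q \<Rightarrow> 'q \<Rightarrow> 'r" where
  "polar q x y = q (x + y) - q x - q y"

definition quadratic_form :: "('r::comm_ring_1 \<Rightarrow> 'q::ab_group_add \<Rightarrow> 'q) \<Rightarrow> ('q \<Rightarrow> 'r) \<Rightarrow> bool" where
  "quadratic_form s q \<longleftrightarrow>
     (\<forall>a z. q (s a z) = a * a * q z) \<and>
     (\<forall>x. lin_functional s (polar q x)) \<and> (\<forall>y. lin_functional s (\<lambda>x. polar q x y))"

text \<open>(Q,q) is a quadratic space: Q f.g. projective, q a quadratic form, and
  z maps to <z,-> is a bijection Q to Q^* (it is automatically linear).\<close>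
definition quadratic_space :: "('r::comm_ring_1 \<Rightarrow> 'q::ab_group_add \<Rightarrow> 'q) \<Rightarrow> ('q \<Rightarrow> 'r) \<Rightarrow> bool" where
  "quadratic_space s q \<longleftrightarrow> fg_projective s \<and> quadratic_form s q \<and>
     inj (polar q) \<and> (\<forall>f. lin_functional s f \<longrightarrow> (\<exists>z. polar q z = f))"

text \<open>The element 1/2 of R (2 is assumed invertible).\<close>
definition half :: "'r::comm_ring_1" where
  "half = (THE h. h * 2 = 1)"

text \<open>M = Q \<perp> H(R)^m, with elements (z, a, b) standing for z + sum a_j x_j + sum b_j f_j;
  the index set {1..m} is represented by a finite type 'm, so m = CARD('m) \<ge> 1.
  P = R^m = ('m \<Rightarrow> 'r), and P^* is identified with R^m via the dual basis f_j,
  i.e. b corresponds to the functional y \<mapsto> sum_j b_j y_j.\<close>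
type_synonym ('q,'r,'m) Mspace = "'q \<times> ('m \<Rightarrow> 'r) \<times> ('m \<Rightarrow> 'r)"

text \<open>R-linear maps Q to P = R^m (resp. Q to P^*, also R^m in coordinates).\<close>
definition lin_to_free :: "('r::comm_ring_1 \<Rightarrow> 'q::ab_group_add \<Rightarrow> 'q) \<Rightarrow> ('q \<Rightarrow> 'm::finite \<Rightarrow> 'r) \<Rightarrow> bool" where
  "lin_to_free s \<alpha> \<longleftrightarrow> (\<forall>j. lin_functional s (\<lambda>z. \<alpha> z j))"

definition adj_alpha :: "('q::ab_group_add \<Rightarrow> 'r::comm_ring_1) \<Rightarrow> ('q \<Rightarrow> 'm::finite \<Rightarrow> 'r) \<Rightarrow> ('m \<Rightarrow> 'r) \<Rightarrow> 'q" where
  "adj_alpha q \<alpha> g = (THE w. \<forall>z. polar q w z = (\<Sum>j\<in>UNIV. g j * \<alpha> z j))"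

definition adj_beta :: "('q::ab_group_add \<Rightarrow> 'r::comm_ring_1) \<Rightarrow> ('q \<Rightarrow> 'm::finite \<Rightarrow> 'r) \<Rightarrow> ('m \<Rightarrow> 'r) \<Rightarrow> 'q" where
  "adj_beta q \<beta> y = (THE w. \<forall>z. polar q w z = (\<Sum>j\<in>UNIV. \<beta> z j * y j))"

definition E_alpha :: "('r::comm_ring_1 \<Rightarrow> 'q::ab_group_add \<Rightarrow> 'q) \<Rightarrow> ('q \<Rightarrow> 'r) \<Rightarrow> ('q \<Rightarrow> 'm::finite \<Rightarrow> 'r)
    \<Rightarrow> ('q,'r,'m) Mspace \<Rightarrow> ('q,'r,'m) Mspace" where
  "E_alpha s q \<alpha> = (\<lambda>(z, y, g).
      (z - adj_alpha q \<alpha> g,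
       (\<lambda>j. y j + \<alpha> z j - half * \<alpha> (adj_alpha q \<alpha> g) j),
       g))"

definition E_beta :: "('r::comm_ring_1 \<Rightarrow> 'q::ab_group_add \<Rightarrow> 'q) \<Rightarrow> ('q \<Rightarrow> 'r) \<Rightarrow> ('q \<Rightarrow> 'm::finite \<Rightarrow> 'r)
    \<Rightarrow> ('q,'r,'m) Mspace \<Rightarrow> ('q,'r,'m) Mspace" where
  "E_beta s q \<beta> = (\<lambda>(z, y, g).
      (z - adj_beta q \<beta> y,
       y,
       (\<lambda>j. g j + \<beta> z j - half * \<beta> (adj_beta q \<beta> y) j)))"

definition gen_perm_group :: "('a \<Rightarrow> 'a) set \<Rightarrow> ('a \<Rightarrow> 'a) set" where
  "gen_perm_group S = generate (BijGroup UNIV) S"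

definition EO :: "('r::comm_ring_1 \<Rightarrow> 'q::ab_group_add \<Rightarrow> 'q) \<Rightarrow> ('q \<Rightarrow> 'r)
    \<Rightarrow> (('q,'r,'m::finite) Mspace \<Rightarrow> ('q,'r,'m) Mspace) set" where
  "EO s q = gen_perm_group
     ({E_alpha s q \<alpha> | \<alpha>. lin_to_free s \<alpha>} \<union> {E_beta s q \<beta> | \<beta>. lin_to_free s \<beta>})"

definition E1 :: "('r::comm_ring_1 \<Rightarrow> 'q::ab_group_add \<Rightarrow> 'q) \<Rightarrow> ('q \<Rightarrow> 'r) \<Rightarrow> 'q \<Rightarrow> 'm
    \<Rightarrow> ('q,'r,'m) Mspace \<Rightarrow> ('q,'r,'m) Mspace" where
  "E1 s q w i = (\<lambda>(z, a, b).
      (z - s (b i) w, (\<lambda>j. a j + (if j = i then polar q z w - b i * q w else 0)), b))"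

definition E2 :: "('r::comm_ring_1 \<Rightarrow> 'q::ab_group_add \<Rightarrow> 'q) \<Rightarrow> ('q \<Rightarrow> 'r) \<Rightarrow> 'q \<Rightarrow> 'm
    \<Rightarrow> ('q,'r,'m) Mspace \<Rightarrow> ('q,'r,'m) Mspace" where
  "E2 s q w i = (\<lambda>(z, a, b).
      (z - s (a i) w, a, (\<lambda>j. b j + (if j = i then polar q z w - a i * q w else 0))))"

definition ETransO :: "('r::comm_ring_1 \<Rightarrow> 'q::ab_group_add \<Rightarrow> 'q) \<Rightarrow> ('q \<Rightarrow> 'r)
    \<Rightarrow> (('q,'r,'m::finite) Mspace \<Rightarrow> ('q,'r,'m) Mspace) set" where
  "ETransO s q = gen_perm_group ({E1 s q w i | w i. True} \<union> {E2 s q w i | w i. True})"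

end

theory Submission
  imports Defs
begin

lemma half_2: assumes "\<exists>h::'r::comm_ring_1. h * 2 = 1" shows "(half::'r) * 2 = 1"
proof -
  obtain h :: 'r where h: "h * 2 = 1" using assms by blast
  have u: "h' = h" if "h' * 2 = 1" for h' :: 'r
  proof -
    have "h' = h' * (h * 2)" using h by simp
    also have "\<dots> = h * (h' * 2)" by (simp add: algebra_simps)
    finally show ?thesis using that by simp
  qed
  have "half = h" unfolding half_def by (rule the_equality) (rule h, erule u)
  thus ?thesis using h by simp
qed

lemma module_mult: "Modules.module ((*) :: 'r::comm_ring_1 \<Rightarrow> 'r \<Rightarrow> 'r)"
  by unfold_locales (auto simp: algebra_simps)

locale qsp =
  fixes s :: "'r::comm_ring_1 \<Rightarrow> 'q::ab_group_add \<Rightarrow> 'q" and q :: "'q \<Rightarrow> 'r"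
  assumes h2: "(half::'r) * 2 = 1" and qs: "quadratic_space s q"
begin

lemma md: "Modules.module s"
  using qs unfolding quadratic_space_def fg_projective_def by blast

lemma qf: "quadratic_form s q"
  using qs unfolding quadratic_space_def by blast

lemma lf_add: "lin_functional s f \<Longrightarrow> f (x + y) = f x + f y"
  unfolding lin_functional_def using module_hom.add by blast

lemma lf_scale: "lin_functional s f \<Longrightarrow> f (s a x) = a * f x"
  unfolding lin_functional_def using module_hom.scale by blast

lemma lf_diff: "lin_functional s f \<Longrightarrow> f (x - y) = f x - f y"
  unfolding lin_functional_def using module_hom.diff by blast

lemma lf_intro:
  assumes "\<And>x y. f (x + y) = f x + f y" "\<And>a x. f (s a x) = a * f x"
  shows "lin_functional s f"
  unfolding lin_functional_def
  by (rule module_hom.intro[OF md module_mult]) (unfold_locales, use assms in auto)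

lemma sc_zero: "s 0 x = 0"
  using module.scale_zero_left[OF md] by blast

lemma sc_add: "s (a + b) x = s a x + s b x"
  using module.scale_left_distrib[OF md] by blast

lemma sc_one: "s 1 x = x"
  using module.scale_one[OF md] by blast

lemma q0: "q 0 = 0"
proof -
  have "q (s 0 0) = 0 * 0 * q 0" using qf unfolding quadratic_form_def by blast
  thus ?thesis by (simp add: sc_zero)
qed

lemma polar_sym: "polar q x y = polar q y x"
  unfolding polar_def by (simp add: add.commute)

lemma polar_lin_left: "lin_functional s (\<lambda>x. polar q x y)"
  using qf unfolding quadratic_form_def by blast

lemma polar_lin_right: "lin_functional s (polar q x)"
  using qf unfolding quadratic_form_def by blast

lemma polar_add_left: "polar q (x + y) z = polar q x z + polar q y z"
  using lf_add[OF polar_lin_left] .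

lemma polar_scale_left: "polar q (s a x) z = a * polar q x z"
  using lf_scale[OF polar_lin_left] .

lemma polar_zero_left: "polar q 0 z = 0"
  unfolding polar_def by (simp add: q0)

lemma polar_self: "polar q w w = 2 * q w"
proof -
  have "q (s 2 w) = 2 * 2 * q w" using qf unfolding quadratic_form_def by blast
  moreover have "s 2 w = w + w" using sc_add[of 1 1 w] by (simp add: sc_one)
  ultimately show ?thesis unfolding polar_def by (simp add: algebra_simps)
qed

lemma polar_inj: "(\<And>z. polar q w z = polar q w' z) \<Longrightarrow> w = w'"
  using qs unfolding quadratic_space_def inj_def by blast

lemma polar_surj: "lin_functional s f \<Longrightarrow> \<exists>w. \<forall>z. polar q w z = f z"
  using qs unfolding quadratic_space_def by metis

lemma fr_add: "lin_to_free s \<alpha> \<Longrightarrow> \<alpha> (x + y) j = \<alpha> x j + \<alpha> y j"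
  unfolding lin_to_free_def using lf_add by blast
lemma fr_diff: "lin_to_free s \<alpha> \<Longrightarrow> \<alpha> (x - y) j = \<alpha> x j - \<alpha> y j"
  unfolding lin_to_free_def using lf_diff by blast
lemma fr_scale: "lin_to_free s \<alpha> \<Longrightarrow> \<alpha> (s a x) j = a * \<alpha> x j"
  unfolding lin_to_free_def using lf_scale by blast

lemma lin_sum: "lin_to_free s \<alpha> \<Longrightarrow> lin_functional s (\<lambda>z. \<Sum>j\<in>UNIV. g j * \<alpha> z j)"
  by (rule lf_intro) (simp_all add: fr_add fr_scale distrib_left sum.distrib sum_distrib_left mult.left_commute)

lemma lin_sum': "lin_to_free s \<alpha> \<Longrightarrow> lin_functional s (\<lambda>z. \<Sum>j\<in>UNIV. \<alpha> z j * g j)"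
  by (rule lf_intro) (simp_all add: fr_add fr_scale distrib_right sum.distrib sum_distrib_left mult.assoc)

lemma adjA_eq: "(\<And>z. polar q w z = (\<Sum>j\<in>UNIV. g j * \<alpha> z j)) \<Longrightarrow> adj_alpha q \<alpha> g = w"
  unfolding adj_alpha_def
  by (rule the_equality) (auto intro: polar_inj)

lemma adjB_eq: "(\<And>z. polar q w z = (\<Sum>j\<in>UNIV. \<alpha> z j * g j)) \<Longrightarrow> adj_beta q \<alpha> g = w"
  unfolding adj_beta_def
  by (rule the_equality) (auto intro: polar_inj)

lemma adjA_prop: "lin_to_free s \<alpha> \<Longrightarrow> polar q (adj_alpha q \<alpha> g) z = (\<Sum>j\<in>UNIV. g j * \<alpha> z j)"
proof -
  assume a: "lin_to_free s \<alpha>"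
  obtain w where w: "\<And>z. polar q w z = (\<Sum>j\<in>UNIV. g j * \<alpha> z j)" using polar_surj[OF lin_sum[OF a, of g]] by blast
  have "adj_alpha q \<alpha> g = w" by (rule adjA_eq) (rule w)
  thus ?thesis using w by simp
qed

lemma adjB_prop: "lin_to_free s \<alpha> \<Longrightarrow> polar q (adj_beta q \<alpha> g) z = (\<Sum>j\<in>UNIV. \<alpha> z j * g j)"
proof -
  assume a: "lin_to_free s \<alpha>"
  obtain w where w: "\<And>z. polar q w z = (\<Sum>j\<in>UNIV. \<alpha> z j * g j)" using polar_surj[OF lin_sum'[OF a, of g]] by blast
  have "adj_beta q \<alpha> g = w" by (rule adjB_eq) (rule w)
  thus ?thesis using w by simp
qed


lemma EA_app: "E_alpha s q \<alpha> (z, y, g) = (z - adj_alpha q \<alpha> g,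
       (\<lambda>j. y j + \<alpha> z j - half * \<alpha> (adj_alpha q \<alpha> g) j), g)"
  by (simp add: E_alpha_def)

lemma EB_app: "E_beta s q \<beta> (z, y, g) = (z - adj_beta q \<beta> y, y,
       (\<lambda>j. g j + \<beta> z j - half * \<beta> (adj_beta q \<beta> y) j))"
  by (simp add: E_beta_def)

lemma fr_intro: "(\<And>j. lin_functional s (\<lambda>z. \<alpha> z j)) \<Longrightarrow> lin_to_free s \<alpha>"
  unfolding lin_to_free_def by blast

lemma fr_plus: "lin_to_free s \<alpha> \<Longrightarrow> lin_to_free s \<beta> \<Longrightarrow> lin_to_free s (\<lambda>z j. \<alpha> z j + \<beta> z j)"
  by (intro fr_intro lf_intro) (simp_all add: fr_add fr_scale algebra_simps)

lemma fr_cmul: "lin_to_free s \<beta> \<Longrightarrow> lin_to_free s (\<lambda>z j. c * \<beta> z j)"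
  by (intro fr_intro lf_intro) (simp_all add: fr_add fr_scale algebra_simps)

lemma fr_neg: "lin_to_free s \<beta> \<Longrightarrow> lin_to_free s (\<lambda>z j. - \<beta> z j)"
  by (intro fr_intro lf_intro) (simp_all add: fr_add fr_scale algebra_simps)

lemma half_half: "s half x + s half x = x"
  using sc_add[of half half x] h2 by (simp add: sc_one mult_2_right[symmetric] mult.commute)

lemma adjA_plus:
  assumes "lin_to_free s \<alpha>" "lin_to_free s \<beta>"
  shows "adj_alpha q (\<lambda>z j. \<alpha> z j + \<beta> z j) g = adj_alpha q \<alpha> g + adj_alpha q \<beta> g"
  by (rule adjA_eq) (simp add: polar_add_left adjA_prop[OF assms(1)] adjA_prop[OF assms(2)]
      distrib_left sum.distrib)

lemma adjA_cmul:
  assumes "lin_to_free s \<beta>"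
  shows "adj_alpha q (\<lambda>z j. c * \<beta> z j) g = s c (adj_alpha q \<beta> g)"
  by (rule adjA_eq) (simp add: polar_scale_left adjA_prop[OF assms(1)] sum_distrib_left mult.left_commute)

lemma adjA_neg:
  assumes "lin_to_free s \<beta>"
  shows "adj_alpha q (\<lambda>z j. - \<beta> z j) g = - (adj_alpha q \<beta> g)"
proof (rule adjA_eq)
  fix z
  have "polar q (- adj_alpha q \<beta> g) z = - polar q (adj_alpha q \<beta> g) z"
    using lf_diff[OF polar_lin_left, of 0 "adj_alpha q \<beta> g" z] by (simp add: polar_zero_left)
  thus "polar q (- adj_alpha q \<beta> g) z = (\<Sum>j\<in>UNIV. g j * - \<beta> z j)"
    by (simp add: adjA_prop[OF assms] sum_negf)
qed

lemma adjB_plus: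
  assumes "lin_to_free s \<alpha>" "lin_to_free s \<beta>"
  shows "adj_beta q (\<lambda>z j. \<alpha> z j + \<beta> z j) g = adj_beta q \<alpha> g + adj_beta q \<beta> g"
  by (rule adjB_eq) (simp add: polar_add_left adjB_prop[OF assms(1)] adjB_prop[OF assms(2)]
      distrib_right sum.distrib)

lemma adjB_cmul:
  assumes "lin_to_free s \<beta>"
  shows "adj_beta q (\<lambda>z j. c * \<beta> z j) g = s c (adj_beta q \<beta> g)"
  by (rule adjB_eq) (simp add: polar_scale_left adjB_prop[OF assms(1)] sum_distrib_left mult.assoc)

lemma adjB_neg:
  assumes "lin_to_free s \<beta>"
  shows "adj_beta q (\<lambda>z j. - \<beta> z j) g = - (adj_beta q \<beta> g)"
proof (rule adjB_eq)
  fix z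
  have "polar q (- adj_beta q \<beta> g) z = - polar q (adj_beta q \<beta> g) z"
    using lf_diff[OF polar_lin_left, of 0 "adj_beta q \<beta> g" z] by (simp add: polar_zero_left)
  thus "polar q (- adj_beta q \<beta> g) z = (\<Sum>j\<in>UNIV. - \<beta> z j * g j)"
    by (simp add: adjB_prop[OF assms] sum_negf)
qed

lemma ring_id: fixes h :: "'r" assumes "h * 2 = 1"
  shows "y + (a + b) - h * (aA + aB + (bA + bB)) = y + h * b - h * (h * (h * bB)) + (a - h * aB) - h * aA + h * (b - h * bB - bA) - h * (h * (h * bB))"
proof -
  have "(y + h * b - h * (h * (h * bB)) + (a - h * aB) - h * aA + h * (b - h * bB - bA) - h * (h * (h * bB)))
     - (y + (a + b) - h * (aA + aB + (bA + bB))) = (h * 2 - 1) * (b - h * (h + 1) * bB)"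
    by (simp add: algebra_simps)
  moreover have "h * 2 - 1 = 0" using assms by simp
  ultimately show ?thesis by (simp only: mult_zero_left right_minus_eq)
qed

lemma EA_plus:
  assumes la: "lin_to_free s \<alpha>" and lb: "lin_to_free s \<beta>"
  shows "E_alpha s q (\<lambda>z j. \<alpha> z j + \<beta> z j)
       = E_alpha s q (\<lambda>z j. half * \<beta> z j) \<circ> E_alpha s q \<alpha> \<circ> E_alpha s q (\<lambda>z j. half * \<beta> z j)"
proof (rule ext, clarify)
  fix z y g
  define A where "A = adj_alpha q \<alpha> g"
  define B where "B = adj_alpha q \<beta> g"
  have zc: "z - (A + B) = z - s half B - A - s half B"
    using half_half[of B] by (simp add: algebra_simps)
  have yc: "y j + (\<alpha> z j + \<beta> z j) - half * (\<alpha> (A + B) j + \<beta> (A + B) j)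
    = y j + half * \<beta> z j - half * (half * \<beta> (s half B) j) + \<alpha> (z - s half B) j -
        half * \<alpha> A j + half * \<beta> (z - s half B - A) j - half * (half * \<beta> (s half B) j)" for j
    by (simp only: fr_add[OF la] fr_add[OF lb] fr_diff[OF la] fr_diff[OF lb] fr_scale[OF la] fr_scale[OF lb])
      (rule ring_id[OF h2])
  have l: "E_alpha s q (\<lambda>z j. \<alpha> z j + \<beta> z j) (z, y, g) = (z - (A + B), 
     \<lambda>j. y j + (\<alpha> z j + \<beta> z j) - half * (\<alpha> (A + B) j + \<beta> (A + B) j), g)"
    unfolding A_def B_def by (simp only: EA_app adjA_plus[OF la lb])
  have r: "(E_alpha s q (\<lambda>z j. half * \<beta> z j) \<circ> E_alpha s q \<alpha> \<circ> E_alpha s q (\<lambda>z j. half * \<beta> z j)) (z, y, g)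
     = (z - s half B - A - s half B, \<lambda>j. y j + half * \<beta> z j - half * (half * \<beta> (s half B) j) + \<alpha> (z - s half B) j -
        half * \<alpha> A j + half * \<beta> (z - s half B - A) j - half * (half * \<beta> (s half B) j), g)"
    unfolding A_def B_def by (simp only: EA_app adjA_cmul[OF lb] comp_apply)
  show "E_alpha s q (\<lambda>z j. \<alpha> z j + \<beta> z j) (z, y, g) =
       (E_alpha s q (\<lambda>z j. half * \<beta> z j) \<circ> E_alpha s q \<alpha> \<circ> E_alpha s q (\<lambda>z j. half * \<beta> z j)) (z, y, g)"
    unfolding l r by (simp only: zc yc)
qed

lemma EB_plus:
  assumes la: "lin_to_free s \<alpha>" and lb: "lin_to_free s \<beta>"
  shows "E_beta s q (\<lambda>z j. \<alpha> z j + \<beta> z j)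
       = E_beta s q (\<lambda>z j. half * \<beta> z j) \<circ> E_beta s q \<alpha> \<circ> E_beta s q (\<lambda>z j. half * \<beta> z j)"
proof (rule ext, clarify)
  fix z y g
  define A where "A = adj_beta q \<alpha> y"
  define B where "B = adj_beta q \<beta> y"
  have zc: "z - (A + B) = z - s half B - A - s half B"
    using half_half[of B] by (simp add: algebra_simps)
  have yc: "g j + (\<alpha> z j + \<beta> z j) - half * (\<alpha> (A + B) j + \<beta> (A + B) j)
    = g j + half * \<beta> z j - half * (half * \<beta> (s half B) j) + \<alpha> (z - s half B) j -
        half * \<alpha> A j + half * \<beta> (z - s half B - A) j - half * (half * \<beta> (s half B) j)" for j
    by (simp only: fr_add[OF la] fr_add[OF lb] fr_diff[OF la] fr_diff[OF lb] fr_scale[OF la] fr_scale[OF lb])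
      (rule ring_id[OF h2])
  have l: "E_beta s q (\<lambda>z j. \<alpha> z j + \<beta> z j) (z, y, g) = (z - (A + B), y,
     \<lambda>j. g j + (\<alpha> z j + \<beta> z j) - half * (\<alpha> (A + B) j + \<beta> (A + B) j))"
    unfolding A_def B_def by (simp only: EB_app adjB_plus[OF la lb])
  have r: "(E_beta s q (\<lambda>z j. half * \<beta> z j) \<circ> E_beta s q \<alpha> \<circ> E_beta s q (\<lambda>z j. half * \<beta> z j)) (z, y, g)
     = (z - s half B - A - s half B, y, \<lambda>j. g j + half * \<beta> z j - half * (half * \<beta> (s half B) j) + \<alpha> (z - s half B) j -
        half * \<alpha> A j + half * \<beta> (z - s half B - A) j - half * (half * \<beta> (s half B) j))"
    unfolding A_def B_def by (simp only: EB_app adjB_cmul[OF lb] comp_apply)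
  show "E_beta s q (\<lambda>z j. \<alpha> z j + \<beta> z j) (z, y, g) =
       (E_beta s q (\<lambda>z j. half * \<beta> z j) \<circ> E_beta s q \<alpha> \<circ> E_beta s q (\<lambda>z j. half * \<beta> z j)) (z, y, g)"
    unfolding l r by (simp only: zc yc)
qed

lemma fr_neg_app: "lin_to_free s \<alpha> \<Longrightarrow> \<alpha> (- x) j = - \<alpha> x j"
  using fr_diff[of \<alpha> 0 x j] fr_diff[of \<alpha> 0 0 j] by simp

lemma ring_id2: fixes h :: "'r" assumes "h * 2 = 1"
  shows "y + a - h * aA + - (a - aA) - h * - (- aA) = y"
proof -
  have "y + a - h * aA + - (a - aA) - h * - (- aA) - y = (1 - h * 2) * aA"
    by (simp add: algebra_simps)
  thus ?thesis using assms by simp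
qed

lemma EA_neg: assumes la: "lin_to_free s \<alpha>"
  shows "E_alpha s q (\<lambda>z j. - \<alpha> z j) \<circ> E_alpha s q \<alpha> = id"
proof (rule ext, clarify)
  fix z y g
  show "(E_alpha s q (\<lambda>z j. - \<alpha> z j) \<circ> E_alpha s q \<alpha>) (z, y, g) = id (z, y, g)"
    by (simp only: comp_apply EA_app adjA_neg[OF la] fr_neg_app[OF la] fr_diff[OF la] ring_id2[OF h2]
        diff_minus_eq_add diff_add_cancel id_apply)
qed

lemma EB_neg: assumes la: "lin_to_free s \<alpha>"
  shows "E_beta s q (\<lambda>z j. - \<alpha> z j) \<circ> E_beta s q \<alpha> = id"
proof (rule ext, clarify)
  fix z y g
  show "(E_beta s q (\<lambda>z j. - \<alpha> z j) \<circ> E_beta s q \<alpha>) (z, y, g) = id (z, y, g)"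
    by (simp only: comp_apply EB_app adjB_neg[OF la] fr_neg_app[OF la] fr_diff[OF la] ring_id2[OF h2]
        diff_minus_eq_add diff_add_cancel id_apply)
qed

lemma EA_bij: assumes la: "lin_to_free s \<alpha>" shows "bij (E_alpha s q \<alpha>)"
proof (rule o_bij)
  show "E_alpha s q (\<lambda>z j. - \<alpha> z j) \<circ> E_alpha s q \<alpha> = id" by (rule EA_neg[OF la])
  show "E_alpha s q \<alpha> \<circ> E_alpha s q (\<lambda>z j. - \<alpha> z j) = id"
    using EA_neg[OF fr_neg[OF la]] by simp
qed

lemma EB_bij: assumes la: "lin_to_free s \<alpha>" shows "bij (E_beta s q \<alpha>)"
proof (rule o_bij)
  show "E_beta s q (\<lambda>z j. - \<alpha> z j) \<circ> E_beta s q \<alpha> = id" by (rule EB_neg[OF la])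
  show "E_beta s q \<alpha> \<circ> E_beta s q (\<lambda>z j. - \<alpha> z j) = id"
    using EB_neg[OF fr_neg[OF la]] by simp
qed

lemma fr_unit: "lin_to_free s (\<lambda>z j. if j = i then polar q z w else 0)"
proof (rule fr_intro)
  fix j show "lin_functional s (\<lambda>z. if j = i then polar q z w else 0)"
    by (cases "j = i") (simp_all add: polar_lin_left, rule lf_intro, simp_all)
qed

lemma sum_unit: fixes b :: "'m::finite \<Rightarrow> 'r" shows "(\<Sum>j\<in>UNIV. b j * (if j = i then c else 0)) = b i * c"
proof -
  have e: "(\<lambda>j. b j * (if j = i then c else 0)) = (\<lambda>j. if j = i then b j * c else 0)" by auto
  show ?thesis unfolding e by simp
qed

lemma sum_unit': fixes b :: "'m::finite \<Rightarrow> 'r" shows "(\<Sum>j\<in>UNIV. (if j = i then c else 0) * b j) = b i * c"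
proof -
  have e: "(\<lambda>j. (if j = i then c else 0) * b j) = (\<lambda>j. if j = i then b j * c else 0)" by auto
  show ?thesis unfolding e by simp
qed

lemma E1_eq: "E1 s q w i = E_alpha s q (\<lambda>z j. if j = i then polar q z w else 0)"
proof (rule ext, clarify)
  fix z a b
  have adj: "adj_alpha q (\<lambda>z j. if j = i then polar q z w else 0) b = s (b i) w"
    by (rule adjA_eq) (simp only: polar_scale_left sum_unit polar_sym[of w])
  have hq: "half * (b i * (2 * q w)) = b i * q w"
    using h2 by (metis mult.commute mult.left_commute mult_1_right)
  show "E1 s q w i (z, a, b) = E_alpha s q (\<lambda>z j. if j = i then polar q z w else 0) (z, a, b)"
    unfolding EA_app adj by (auto simp: E1_def polar_scale_left polar_self hq)
qed

lemma E2_eq: "E2 s q w i = E_beta s q (\<lambda>z j. if j = i then polar q z w else 0)"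
proof (rule ext, clarify)
  fix z a b
  have adj: "adj_beta q (\<lambda>z j. if j = i then polar q z w else 0) a = s (a i) w"
    by (rule adjB_eq) (simp only: polar_scale_left sum_unit' polar_sym[of w])
  have hq: "half * (a i * (2 * q w)) = a i * q w"
    using h2 by (metis mult.commute mult.left_commute mult_1_right)
  show "E2 s q w i (z, a, b) = E_beta s q (\<lambda>z j. if j = i then polar q z w else 0) (z, a, b)"
    unfolding EB_app adj by (auto simp: E2_def polar_scale_left polar_self hq)
qed

lemma EA_zero: "E_alpha s q (\<lambda>z j. 0) = id"
proof -
  have "adj_alpha q (\<lambda>z j. 0) g = 0" for g by (rule adjA_eq) (simp add: polar_zero_left)
  thus ?thesis by (intro ext, clarify) (simp add: EA_app)
qed

lemma EB_zero: "E_beta s q (\<lambda>z j. 0) = id"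
proof -
  have "adj_beta q (\<lambda>z j. 0) g = 0" for g by (rule adjB_eq) (simp add: polar_zero_left)
  thus ?thesis by (intro ext, clarify) (simp add: EB_app)
qed



lemma fr_zero: "lin_functional s (\<lambda>z. 0)"
  by (rule lf_intro) simp_all

lemma fr_restrict: "lin_to_free s \<alpha> \<Longrightarrow> lin_to_free s (\<lambda>z j. if j \<in> S then \<alpha> z j else 0)"
  by (rule fr_intro, case_tac "j \<in> S") (auto simp: lin_to_free_def fr_zero)

lemma fr_single: "lin_to_free s \<alpha> \<Longrightarrow> lin_to_free s (\<lambda>z j. if j = k then \<alpha> z j else 0)"
  by (rule fr_intro, case_tac "j = k") (auto simp: lin_to_free_def fr_zero)

lemma Bij_UNIV: "f \<in> Bij UNIV \<longleftrightarrow> bij f"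
  by (simp add: Bij_def)

lemma gen_comp:
  assumes "H \<subseteq> Bij UNIV" "f \<in> generate (BijGroup UNIV) H" "g \<in> generate (BijGroup UNIV) H"
  shows "f \<circ> g \<in> generate (BijGroup UNIV) H"
proof -
  have c: "H \<subseteq> carrier (BijGroup UNIV)" using assms(1) by (simp add: BijGroup_def)
  have f: "f \<in> Bij UNIV" using group.generate_in_carrier[OF group_BijGroup c assms(2)] by (simp add: BijGroup_def)
  have g: "g \<in> Bij UNIV" using group.generate_in_carrier[OF group_BijGroup c assms(3)] by (simp add: BijGroup_def)
  have "f \<otimes>\<^bsub>BijGroup UNIV\<^esub> g \<in> generate (BijGroup UNIV) H" by (rule generate.eng[OF assms(2,3)])
  moreover have "f \<otimes>\<^bsub>BijGroup UNIV\<^esub> g = f \<circ> g" using f g by (simp add: BijGroup_def compose_def restrict_def fun_eq_iff)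
  ultimately show ?thesis by simp
qed

lemma gen_id: fixes H :: "('a \<Rightarrow> 'a) set" shows "id \<in> generate (BijGroup UNIV) H"
proof -
  have "\<one>\<^bsub>BijGroup (UNIV :: 'a set)\<^esub> = id" by (simp add: BijGroup_def id_def restrict_def)
  thus ?thesis using generate.one[of "BijGroup UNIV" H] by simp
qed

lemma EA_gen:
  fixes \<alpha> :: "'q \<Rightarrow> 'm::finite \<Rightarrow> 'r"
  assumes la: "lin_to_free s \<alpha>"
    and ST: "({E1 s q w i | w i. True} \<union> {E2 s q w i | w i. True} :: (('q,'r,'m) Mspace \<Rightarrow> ('q,'r,'m) Mspace) set) \<subseteq> Bij UNIV"
  shows "E_alpha s q \<alpha> \<in> generate (BijGroup UNIV) ({E1 s q w i | w i. True} \<union> {E2 s q w i | w i. True})"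
proof -
  let ?H = "{E1 s q w i | w i. True} \<union> {E2 s q w i | w i. True}"
  have "finite S \<Longrightarrow> E_alpha s q (\<lambda>z j. if j \<in> S then \<alpha> z j else 0) \<in> generate (BijGroup UNIV) ?H" for S
  proof (induction S rule: finite_induct)
    case empty
    have e: "(\<lambda>z j. if j \<in> {} then \<alpha> z j else 0) = (\<lambda>z j. 0)" by simp
    show ?case unfolding e EA_zero by (rule gen_id)
  next
    case (insert k S)
    define aS where "aS = (\<lambda>z j. if j \<in> S then \<alpha> z j else 0)"
    define b where "b = (\<lambda>z j. if j = k then \<alpha> z j else 0)"
    have laS: "lin_to_free s aS" unfolding aS_def by (rule fr_restrict[OF la])
    have lb: "lin_to_free s b" unfolding b_def by (rule fr_single[OF la])
    have eq: "(\<lambda>z j. if j \<in> insert k S then \<alpha> z j else 0) = (\<lambda>z j. aS z j + b z j)"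
      using insert(2) by (auto simp: aS_def b_def fun_eq_iff)
    have "lin_functional s (\<lambda>z. half * \<alpha> z k)"
      using fr_cmul[OF la, of half] unfolding lin_to_free_def by blast
    then obtain w where w: "\<And>z. polar q w z = half * \<alpha> z k" using polar_surj by blast
    have hb: "(\<lambda>z j. half * b z j) = (\<lambda>z j. if j = k then polar q z w else 0)"
      by (auto simp: b_def fun_eq_iff w polar_sym[of _ w])
    have e1: "E_alpha s q (\<lambda>z j. half * b z j) \<in> generate (BijGroup UNIV) ?H"
      unfolding hb E1_eq[symmetric] by (rule generate.incl) blast
    have "E_alpha s q aS \<in> generate (BijGroup UNIV) ?H" using insert(3) by (simp add: aS_def)
    hence "E_alpha s q (\<lambda>z j. half * b z j) \<circ> E_alpha s q aS \<circ> E_alpha s q (\<lambda>z j. half * b z j)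
        \<in> generate (BijGroup UNIV) ?H"
      by (rule gen_comp[OF ST gen_comp[OF ST e1] e1])
    thus ?case unfolding eq EA_plus[OF laS lb] .
  qed
  from this[of UNIV] show ?thesis by simp
qed

lemma EB_gen:
  fixes \<alpha> :: "'q \<Rightarrow> 'm::finite \<Rightarrow> 'r"
  assumes la: "lin_to_free s \<alpha>"
    and ST: "({E1 s q w i | w i. True} \<union> {E2 s q w i | w i. True} :: (('q,'r,'m) Mspace \<Rightarrow> ('q,'r,'m) Mspace) set) \<subseteq> Bij UNIV"
  shows "E_beta s q \<alpha> \<in> generate (BijGroup UNIV) ({E1 s q w i | w i. True} \<union> {E2 s q w i | w i. True})"
proof -
  let ?H = "{E1 s q w i | w i. True} \<union> {E2 s q w i | w i. True}"
  have "finite S \<Longrightarrow> E_beta s q (\<lambda>z j. if j \<in> S then \<alpha> z j else 0) \<in> generate (BijGroup UNIV) ?H" for S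
  proof (induction S rule: finite_induct)
    case empty
    have e: "(\<lambda>z j. if j \<in> {} then \<alpha> z j else 0) = (\<lambda>z j. 0)" by simp
    show ?case unfolding e EB_zero by (rule gen_id)
  next
    case (insert k S)
    define aS where "aS = (\<lambda>z j. if j \<in> S then \<alpha> z j else 0)"
    define b where "b = (\<lambda>z j. if j = k then \<alpha> z j else 0)"
    have laS: "lin_to_free s aS" unfolding aS_def by (rule fr_restrict[OF la])
    have lb: "lin_to_free s b" unfolding b_def by (rule fr_single[OF la])
    have eq: "(\<lambda>z j. if j \<in> insert k S then \<alpha> z j else 0) = (\<lambda>z j. aS z j + b z j)"
      using insert(2) by (auto simp: aS_def b_def fun_eq_iff)
    have "lin_functional s (\<lambda>z. half * \<alpha> z k)"
      using fr_cmul[OF la, of half] unfolding lin_to_free_def by blast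
    then obtain w where w: "\<And>z. polar q w z = half * \<alpha> z k" using polar_surj by blast
    have hb: "(\<lambda>z j. half * b z j) = (\<lambda>z j. if j = k then polar q z w else 0)"
      by (auto simp: b_def fun_eq_iff w polar_sym[of _ w])
    have e1: "E_beta s q (\<lambda>z j. half * b z j) \<in> generate (BijGroup UNIV) ?H"
      unfolding hb E2_eq[symmetric] by (rule generate.incl) blast
    have "E_beta s q aS \<in> generate (BijGroup UNIV) ?H" using insert(3) by (simp add: aS_def)
    hence "E_beta s q (\<lambda>z j. half * b z j) \<circ> E_beta s q aS \<circ> E_beta s q (\<lambda>z j. half * b z j)
        \<in> generate (BijGroup UNIV) ?H"
      by (rule gen_comp[OF ST gen_comp[OF ST e1] e1])
    thus ?case unfolding eq EB_plus[OF laS lb] .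
  qed
  from this[of UNIV] show ?thesis by simp
qed

lemma main:
  "(EO s q :: (('q,'r,'m::finite) Mspace \<Rightarrow> ('q,'r,'m) Mspace) set) = ETransO s q"
proof -
  let ?G = "BijGroup (UNIV :: ('q,'r,'m) Mspace set)"
  let ?SA = "{E_alpha s q \<alpha> | \<alpha>. lin_to_free s \<alpha>} \<union> {E_beta s q \<beta> | \<beta>. lin_to_free s \<beta>}
     :: (('q,'r,'m) Mspace \<Rightarrow> ('q,'r,'m) Mspace) set"
  let ?ST = "{E1 s q w i | w i. True} \<union> {E2 s q w i | w i. True}
     :: (('q,'r,'m) Mspace \<Rightarrow> ('q,'r,'m) Mspace) set"
  have grp: "group ?G" by (rule group_BijGroup)
  have STSA: "?ST \<subseteq> ?SA" using E1_eq E2_eq fr_unit by blast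
  have SAB: "?SA \<subseteq> Bij UNIV" using EA_bij EB_bij Bij_UNIV by blast
  have STB: "?ST \<subseteq> Bij UNIV" using STSA SAB by blast
  have c: "?ST \<subseteq> carrier ?G" using STB by (simp add: BijGroup_def)
  have sub: "?SA \<subseteq> generate ?G ?ST" using EA_gen[OF _ STB] EB_gen[OF _ STB] by blast
  have "generate ?G ?SA \<subseteq> generate ?G ?ST"
    by (rule group.generate_subgroup_incl[OF grp sub group.generate_is_subgroup[OF grp c]])
  moreover have "generate ?G ?ST \<subseteq> generate ?G ?SA"
    by (rule group.mono_generate[OF grp STSA])
  ultimately show ?thesis unfolding EO_def ETransO_def gen_perm_group_def by blast
qed

end

theorem mainTheorem2:
  fixes s :: "'r::comm_ring_1 \<Rightarrow> 'q::ab_group_add \<Rightarrow> 'q"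
    and q :: "'q \<Rightarrow> 'r"
  assumes "\<exists>h::'r. h * 2 = 1"
    and "quadratic_space s q"
  shows "(EO s q :: (('q,'r,'m::finite) Mspace \<Rightarrow> ('q,'r,'m) Mspace) set) = ETransO s q"
proof -
  interpret qsp s q by unfold_locales (rule half_2[OF assms(1)], rule assms(2))
  show ?thesis by (rule main)
qed

end
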